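(* For every strongly binary $2$-matroid $Z$ there is a unique strongly binary $2$-sheltering matroid $Q$ such that $\mathcal Z(Q)=Z$.
   Context: Let $\Omega$ be a partition of a finite set $U$ into classes of size $2$. A subtransversal (transversal) meets every class in at most (exactly) one element. A transversal $2$-tuple is an ordered pair $\tau=(T_1,T_2)$ of disjoint transversals; each $t\in T_1$ corresponds to the unique $\bar t\in T_2$ with $\{t,\bar t\}\in\Omega$. For a $T_1\times T_2$ matrix $A$ over a field $\mathbb F$ that is skew-symmetric (i.e. $A_{s,\bar t}=-A_{t,\bar s}$ for all $s,t\in T_1$), $\mathcal Q(A,\tau,2)=(M,\Omega)$ where $M$ is the column matroid of $(I\mid A)$, rows indexed by $T_1$, identity columns indexed by $T_1$ and the columns of $A$ indexed by $T_2$; this is a $2$-sheltering matroid. A sheltering matroid is a pair $Q=(M,\Omega)$ with $M$ a matroid on $U$ such that for every independent subtransversal $I$ and every class $\{x,y\}$ disjoint from $I$, $I\cup\{x\}$ or $I\cup\{y\}$ is independent; $\mathcal Z(Q)$ denotes the multimatroid ($2$-matroid) on $(U,\Omega)$ whose independent sets are the independent subtransversals of $M$. A $2$-sheltering matroid $Q$ is strongly binary if $Q=\mathcal Q(A,\tau,2)$ for some transversal $2$-tuple $\tau$ and some skew-symmetric (equivalently, symmetric) matrix $A$ over $GF(2)$; a $2$-matroid $Z$ is strongly binary if $Z=\mathcal Z(Q)$ for some strongly binary $2$-sheltering matroid $Q$. Equality of sheltering matroids means equality of the matroids on $U$ together with the same partition $\Omega$. *)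

theory Defs
  imports Main "HOL-Library.Z2"
begin

definition pair_partition :: "'a set set \<Rightarrow> bool" where
  "pair_partition \<Omega> \<longleftrightarrow> finite (\<Union>\<Omega>) \<and> (\<forall>\<omega>\<in>\<Omega>. card \<omega> = 2)
     \<and> (\<forall>\<omega>1\<in>\<Omega>. \<forall>\<omega>2\<in>\<Omega>. \<omega>1 \<noteq> \<omega>2 \<longrightarrow> \<omega>1 \<inter> \<omega>2 = {})"

definition subtransversal :: "'a set set \<Rightarrow> 'a set \<Rightarrow> bool" where
  "subtransversal \<Omega> S \<longleftrightarrow> S \<subseteq> \<Union>\<Omega> \<and> (\<forall>\<omega>\<in>\<Omega>. card (S \<inter> \<omega>) \<le> 1)"

definition transversal :: "'a set set \<Rightarrow> 'a set \<Rightarrow> bool" where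
  "transversal \<Omega> T \<longleftrightarrow> T \<subseteq> \<Union>\<Omega> \<and> (\<forall>\<omega>\<in>\<Omega>. card (T \<inter> \<omega>) = 1)"

definition transversal_2tuple :: "'a set set \<Rightarrow> 'a set \<times> 'a set \<Rightarrow> bool" where
  "transversal_2tuple \<Omega> \<tau> \<longleftrightarrow> transversal \<Omega> (fst \<tau>) \<and> transversal \<Omega> (snd \<tau>)
     \<and> fst \<tau> \<inter> snd \<tau> = {}"

definition partner :: "'a set set \<Rightarrow> 'a set \<times> 'a set \<Rightarrow> 'a \<Rightarrow> 'a" where
  "partner \<Omega> \<tau> t = (THE u. u \<in> snd \<tau> \<and> {t, u} \<in> \<Omega>)"

text \<open>A T1 x T2 matrix over a field (entries A t u for t in T1, u in T2) is skew-symmetric.\<close>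
definition skew_symmetric :: "'a set set \<Rightarrow> 'a set \<times> 'a set \<Rightarrow> ('a \<Rightarrow> 'a \<Rightarrow> 'f::field) \<Rightarrow> bool" where
  "skew_symmetric \<Omega> \<tau> A \<longleftrightarrow>
     (\<forall>s\<in>fst \<tau>. \<forall>t\<in>fst \<tau>. A s (partner \<Omega> \<tau> t) = - A t (partner \<Omega> \<tau> s))"

text \<open>Columns of (I | A): rows indexed by T1; identity columns indexed by T1,
  columns of A indexed by T2.\<close>
definition IA_column :: "'a set \<times> 'a set \<Rightarrow> ('a \<Rightarrow> 'a \<Rightarrow> 'f::field) \<Rightarrow> 'a \<Rightarrow> 'a \<Rightarrow> 'f" where
  "IA_column \<tau> A u t = (if u \<in> fst \<tau> then (if t = u then 1 else 0) else A t u)"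

definition column_indep :: "'a set \<times> 'a set \<Rightarrow> ('a \<Rightarrow> 'a \<Rightarrow> 'f::field) \<Rightarrow> 'a set \<Rightarrow> bool" where
  "column_indep \<tau> A S \<longleftrightarrow> S \<subseteq> fst \<tau> \<union> snd \<tau> \<and>
     (\<forall>c :: 'a \<Rightarrow> 'f. (\<forall>t\<in>fst \<tau>. (\<Sum>u\<in>S. c u * IA_column \<tau> A u t) = 0) \<longrightarrow> (\<forall>u\<in>S. c u = 0))"

text \<open>A sheltering matroid Q = (M, \<Omega>) is represented as the pair (\<Omega>, family of independent
  sets of M); the ground set is \<Union>\<Omega>.\<close>
type_synonym 'a sheltering = "'a set set \<times> 'a set set"

text \<open>A 2-matroid (multimatroid) on (U, \<Omega>) represented as (\<Omega>, independent sets).\<close>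
type_synonym 'a multimatroid = "'a set set \<times> 'a set set"

definition Q_of :: "('a \<Rightarrow> 'a \<Rightarrow> 'f::field) \<Rightarrow> 'a set \<times> 'a set \<Rightarrow> 'a set set \<Rightarrow> 'a sheltering" where
  "Q_of A \<tau> \<Omega> = (\<Omega>, {S. column_indep \<tau> A S})"

definition Z_of :: "'a sheltering \<Rightarrow> 'a multimatroid" where
  "Z_of Q = (fst Q, {I \<in> snd Q. subtransversal (fst Q) I})"

definition strongly_binary_sheltering :: "'a sheltering \<Rightarrow> bool" where
  "strongly_binary_sheltering Q \<longleftrightarrow> pair_partition (fst Q) \<and>
     (\<exists>\<tau> (A :: 'a \<Rightarrow> 'a \<Rightarrow> bit). transversal_2tuple (fst Q) \<tau> \<and>
        skew_symmetric (fst Q) \<tau> A \<and> Q = Q_of A \<tau> (fst Q))"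

definition strongly_binary_2matroid :: "'a multimatroid \<Rightarrow> bool" where
  "strongly_binary_2matroid Z \<longleftrightarrow> (\<exists>Q. strongly_binary_sheltering Q \<and> Z = Z_of Q)"

end

theory Submission
  imports Defs
begin

lemma two_elem:
  assumes "\<omega> = {x,y}" "x \<noteq> y" "a \<in> \<omega>"
  shows "\<exists>b. b \<noteq> a \<and> \<omega> = {a,b}"
proof (cases "a = x")
  case True thus ?thesis using assms by (intro exI[of _ y]) auto
next
  case False hence "a = y" using assms by blast
  thus ?thesis using assms by (intro exI[of _ x]) auto
qed

definition mate :: "'a set set \<Rightarrow> 'a \<Rightarrow> 'a" where
  "mate \<Omega> a = (THE b. b \<noteq> a \<and> {a,b} \<in> \<Omega>)"

lemma mate_ex1:
  assumes pp: "pair_partition \<Omega>" and a: "a \<in> \<Union>\<Omega>"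
  shows "\<exists>!b. b \<noteq> a \<and> {a,b} \<in> \<Omega>"
proof -
  from a obtain \<omega> where w: "\<omega> \<in> \<Omega>" "a \<in> \<omega>" by blast
  with pp have "card \<omega> = 2" unfolding pair_partition_def by blast
  then obtain x y where xy: "x \<noteq> y" "\<omega> = {x,y}" by (meson card_2_iff)
  then obtain b where b: "b \<noteq> a" "\<omega> = {a,b}" using w two_elem by metis
  show ?thesis
  proof (rule ex1I[of _ b])
    show "b \<noteq> a \<and> {a,b} \<in> \<Omega>" using b w by simp
  next
    fix b' assume h: "b' \<noteq> a \<and> {a,b'} \<in> \<Omega>"
    have "{a,b'} = {a,b}"
    proof (rule ccontr)
      assume "{a,b'} \<noteq> {a,b}"
      with pp h w b have "{a,b'} \<inter> {a,b} = {}" unfolding pair_partition_def by metis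
      thus False by blast
    qed
    with h b show "b' = b" by (metis doubleton_eq_iff)
  qed
qed

lemma mate_prop:
  assumes "pair_partition \<Omega>" "a \<in> \<Union>\<Omega>"
  shows "mate \<Omega> a \<noteq> a \<and> {a, mate \<Omega> a} \<in> \<Omega>"
  unfolding mate_def using theI'[OF mate_ex1[OF assms]] .

lemma mate_unique:
  assumes "pair_partition \<Omega>" "{a,b} \<in> \<Omega>" "a \<noteq> b"
  shows "mate \<Omega> a = b"
proof -
  have a: "a \<in> \<Union>\<Omega>" using assms(2) by blast
  show ?thesis using mate_ex1[OF assms(1) a] mate_prop[OF assms(1) a] assms(2,3) by metis
qed

lemma mate_in:
  assumes "pair_partition \<Omega>" "a \<in> \<Union>\<Omega>"
  shows "mate \<Omega> a \<in> \<Union>\<Omega>"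
  using mate_prop[OF assms] by blast

lemma mate_mate:
  assumes "pair_partition \<Omega>" "a \<in> \<Union>\<Omega>"
  shows "mate \<Omega> (mate \<Omega> a) = a"
proof -
  have "{mate \<Omega> a, a} \<in> \<Omega>" using mate_prop[OF assms] by (simp add: insert_commute)
  thus ?thesis using mate_unique[OF assms(1)] mate_prop[OF assms] by metis
qed

lemma class_eq:
  assumes "pair_partition \<Omega>" "\<omega> \<in> \<Omega>" "a \<in> \<omega>"
  shows "\<omega> = {a, mate \<Omega> a}"
proof -
  have a: "a \<in> \<Union>\<Omega>" using assms by blast
  have "card \<omega> = 2" using assms unfolding pair_partition_def by blast
  then obtain x y where xy: "x \<noteq> y" "\<omega> = {x,y}" by (meson card_2_iff)
  then obtain b where b: "b \<noteq> a" "\<omega> = {a,b}" using assms two_elem by metis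
  have "mate \<Omega> a = b" using mate_unique[OF assms(1)] b assms(2) by metis
  thus ?thesis using b by simp
qed

lemma transv_mate:
  assumes pp: "pair_partition \<Omega>" and t: "transversal \<Omega> T" "transversal \<Omega> T'"
    and d: "T \<inter> T' = {}" and a: "a \<in> T"
  shows "mate \<Omega> a \<in> T'"
proof -
  have aU: "a \<in> \<Union>\<Omega>" using t a unfolding transversal_def by blast
  let ?m = "mate \<Omega> a"
  have w: "{a, ?m} \<in> \<Omega>" "?m \<noteq> a" using mate_prop[OF pp aU] by auto
  have "card (T' \<inter> {a, ?m}) = 1" using t(2) w unfolding transversal_def by blast
  then obtain z where z: "T' \<inter> {a, ?m} = {z}" by (meson card_1_singletonE)
  have "z \<noteq> a" using z d a by blast
  hence "z = ?m" using z by blast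
  thus ?thesis using z by blast
qed

lemma transv_union:
  assumes pp: "pair_partition \<Omega>" and t: "transversal_2tuple \<Omega> \<tau>"
  shows "fst \<tau> \<union> snd \<tau> = \<Union>\<Omega>"
proof
  show "fst \<tau> \<union> snd \<tau> \<subseteq> \<Union>\<Omega>" using t unfolding transversal_2tuple_def transversal_def by blast
next
  show "\<Union>\<Omega> \<subseteq> fst \<tau> \<union> snd \<tau>"
  proof
    fix a assume aU: "a \<in> \<Union>\<Omega>"
    let ?m = "mate \<Omega> a"
    have w: "{a, ?m} \<in> \<Omega>" "?m \<noteq> a" using mate_prop[OF pp aU] by auto
    have c1: "card (fst \<tau> \<inter> {a, ?m}) = 1" "card (snd \<tau> \<inter> {a, ?m}) = 1"
      using t w unfolding transversal_2tuple_def transversal_def by blast+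
    obtain z1 where z1: "fst \<tau> \<inter> {a, ?m} = {z1}" using c1(1) by (meson card_1_singletonE)
    obtain z2 where z2: "snd \<tau> \<inter> {a, ?m} = {z2}" using c1(2) by (meson card_1_singletonE)
    have "z1 \<noteq> z2" using z1 z2 t unfolding transversal_2tuple_def by blast
    hence "z1 = a \<or> z2 = a" using z1 z2 by blast
    thus "a \<in> fst \<tau> \<union> snd \<tau>" using z1 z2 by blast
  qed
qed

lemma partner_eq:
  assumes pp: "pair_partition \<Omega>" and t: "transversal_2tuple \<Omega> \<tau>" and a: "a \<in> fst \<tau>"
  shows "partner \<Omega> \<tau> a = mate \<Omega> a"
proof -
  have aU: "a \<in> \<Union>\<Omega>" using transv_union[OF pp t] a by blast
  have m2: "mate \<Omega> a \<in> snd \<tau>" using transv_mate[OF pp _ _ _ a] t unfolding transversal_2tuple_def by blast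
  have w: "{a, mate \<Omega> a} \<in> \<Omega>" using mate_prop[OF pp aU] by auto
  show ?thesis unfolding partner_def
  proof (rule the_equality)
    show "mate \<Omega> a \<in> snd \<tau> \<and> {a, mate \<Omega> a} \<in> \<Omega>" using m2 w by simp
  next
    fix u assume "u \<in> snd \<tau> \<and> {a, u} \<in> \<Omega>"
    moreover have "u \<noteq> a" using calculation a t unfolding transversal_2tuple_def by blast
    ultimately show "u = mate \<Omega> a" using mate_unique[OF pp] by metis
  qed
qed

lemma subtransversal_crit:
  assumes pp: "pair_partition \<Omega>" and X: "X \<subseteq> \<Union>\<Omega>" "\<forall>a\<in>X. mate \<Omega> a \<notin> X"
  shows "subtransversal \<Omega> X"
  unfolding subtransversal_def
proof (intro conjI ballI X(1))
  fix \<omega> assume w: "\<omega> \<in> \<Omega>"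
  have "card \<omega> = 2" using pp w unfolding pair_partition_def by blast
  then obtain x y where xy: "x \<noteq> y" "\<omega> = {x,y}" by (meson card_2_iff)
  have "mate \<Omega> x = y" using mate_unique[OF pp] xy w by metis
  hence "X \<inter> \<omega> = {} \<or> X \<inter> \<omega> = {x} \<or> X \<inter> \<omega> = {y}" using X(2) xy by auto
  thus "card (X \<inter> \<omega>) \<le> 1" by auto
qed

lemma transversal_sub: "transversal \<Omega> T \<Longrightarrow> subtransversal \<Omega> T"
  unfolding transversal_def subtransversal_def by simp

lemma card_transv:
  assumes pp: "pair_partition \<Omega>" and t: "transversal_2tuple \<Omega> \<tau>"
  shows "card (\<Union>\<Omega>) = 2 * card (fst \<tau>)"
proof -
  have fin: "finite (\<Union>\<Omega>)" using pp unfolding pair_partition_def by blast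
  have u: "fst \<tau> \<union> snd \<tau> = \<Union>\<Omega>" using transv_union[OF pp t] .
  have d: "fst \<tau> \<inter> snd \<tau> = {}" using t unfolding transversal_2tuple_def by blast
  have tt: "transversal \<Omega> (fst \<tau>)" "transversal \<Omega> (snd \<tau>)" using t unfolding transversal_2tuple_def by blast+
  have "bij_betw (mate \<Omega>) (fst \<tau>) (snd \<tau>)"
  proof (rule bij_betw_byWitness[where f'="mate \<Omega>"])
    show "\<forall>a\<in>fst \<tau>. mate \<Omega> (mate \<Omega> a) = a" using mate_mate[OF pp] u by blast
    show "\<forall>a\<in>snd \<tau>. mate \<Omega> (mate \<Omega> a) = a" using mate_mate[OF pp] u by blast
    show "mate \<Omega> ` fst \<tau> \<subseteq> snd \<tau>" using transv_mate[OF pp tt d] by blast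
    have d': "snd \<tau> \<inter> fst \<tau> = {}" using d by blast
    show "mate \<Omega> ` snd \<tau> \<subseteq> fst \<tau>" using transv_mate[OF pp tt(2) tt(1) d'] by blast
  qed
  hence "card (fst \<tau>) = card (snd \<tau>)" by (rule bij_betw_same_card)
  moreover have "card (\<Union>\<Omega>) = card (fst \<tau>) + card (snd \<tau>)"
    using u d fin by (metis card_Un_disjoint finite_Un)
  ultimately show ?thesis by simp
qed


declare add_bit_eq_xor[simp del] mult_bit_eq_and[simp del]

lemma bit_add_self[simp]: "(x::bit) + x = 0"
  by (cases x) simp_all

lemma bit_add_eq0: "(x::bit) + y = 0 \<longleftrightarrow> x = y"
  by (cases x; cases y) simp_all

lemma bit_of_nat_0: "(of_nat n :: bit) = 0 \<longleftrightarrow> even n"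
  by (induct n) (auto simp: bit_add_eq0)

definition sd :: "'a set \<Rightarrow> 'a set \<Rightarrow> 'a set" where
  "sd Y Z = (Y - Z) \<union> (Z - Y)"

lemma sum_sd:
  assumes "finite Y" "finite Z"
  shows "(\<Sum>x\<in>sd Y Z. f x) = sum f Y + (sum f Z :: bit)"
proof -
  have "sum f Y = sum f (Y \<inter> Z) + sum f (Y - Z)" using assms by (simp add: sum.Int_Diff)
  moreover have "sum f Z = sum f (Y \<inter> Z) + sum f (Z - Y)" using assms
    by (metis Int_commute sum.Int_Diff)
  moreover have "(\<Sum>x\<in>sd Y Z. f x) = sum f (Y - Z) + sum f (Z - Y)"
    unfolding sd_def using assms by (intro sum.union_disjoint) auto
  ultimately show ?thesis by (simp add: algebra_simps)
qed

definition cyc :: "'a set \<times> 'a set \<Rightarrow> ('a \<Rightarrow> 'a \<Rightarrow> bit) \<Rightarrow> 'a set \<Rightarrow> bool" where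
  "cyc \<tau> A Y \<longleftrightarrow> Y \<subseteq> fst \<tau> \<union> snd \<tau> \<and> (\<forall>t\<in>fst \<tau>. (\<Sum>y\<in>Y. IA_column \<tau> A y t) = 0)"

lemma indep_cyc:
  assumes fin: "finite (fst \<tau> \<union> snd \<tau>)"
  shows "column_indep \<tau> A X \<longleftrightarrow> X \<subseteq> fst \<tau> \<union> snd \<tau> \<and> (\<forall>Y\<subseteq>X. Y \<noteq> {} \<longrightarrow> \<not> cyc \<tau> A Y)"
proof
  assume ci: "column_indep \<tau> A X"
  hence XU: "X \<subseteq> fst \<tau> \<union> snd \<tau>" unfolding column_indep_def by blast
  have finX: "finite X" using XU fin finite_subset by blast
  show "X \<subseteq> fst \<tau> \<union> snd \<tau> \<and> (\<forall>Y\<subseteq>X. Y \<noteq> {} \<longrightarrow> \<not> cyc \<tau> A Y)"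
  proof (intro conjI XU allI impI notI)
    fix Y assume Y: "Y \<subseteq> X" "Y \<noteq> {}" "cyc \<tau> A Y"
    define c :: "'a \<Rightarrow> bit" where "c = (\<lambda>u. if u \<in> Y then 1 else 0)"
    have "\<forall>t\<in>fst \<tau>. (\<Sum>u\<in>X. c u * IA_column \<tau> A u t) = 0"
    proof
      fix t assume t: "t \<in> fst \<tau>"
      have "(\<Sum>u\<in>X. c u * IA_column \<tau> A u t) = (\<Sum>u\<in>X. if u \<in> Y then IA_column \<tau> A u t else 0)"
        unfolding c_def by (intro sum.cong) auto
      also have "\<dots> = (\<Sum>u\<in>X \<inter> Y. IA_column \<tau> A u t)" using finX by (simp add: sum.inter_restrict)
      also have "X \<inter> Y = Y" using Y by blast
      finally show "(\<Sum>u\<in>X. c u * IA_column \<tau> A u t) = 0" using Y(3) t unfolding cyc_def by simp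
    qed
    hence "\<forall>u\<in>X. c u = 0" using ci unfolding column_indep_def by blast
    thus False using Y unfolding c_def by force
  qed
next
  assume h: "X \<subseteq> fst \<tau> \<union> snd \<tau> \<and> (\<forall>Y\<subseteq>X. Y \<noteq> {} \<longrightarrow> \<not> cyc \<tau> A Y)"
  have finX: "finite X" using h fin finite_subset by blast
  show "column_indep \<tau> A X" unfolding column_indep_def
  proof (intro conjI allI impI)
    show "X \<subseteq> fst \<tau> \<union> snd \<tau>" using h by blast
  next
    fix c :: "'a \<Rightarrow> bit" assume hc: "\<forall>t\<in>fst \<tau>. (\<Sum>u\<in>X. c u * IA_column \<tau> A u t) = 0"
    define Y where "Y = {u\<in>X. c u = 1}"
    have "cyc \<tau> A Y" unfolding cyc_def
    proof (intro conjI ballI)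
      show "Y \<subseteq> fst \<tau> \<union> snd \<tau>" using h unfolding Y_def by blast
    next
      fix t assume t: "t \<in> fst \<tau>"
      have "(\<Sum>u\<in>X. c u * IA_column \<tau> A u t) = (\<Sum>u\<in>X. if u \<in> Y then IA_column \<tau> A u t else 0)"
        unfolding Y_def by (intro sum.cong) auto
      also have "\<dots> = (\<Sum>u\<in>X \<inter> Y. IA_column \<tau> A u t)" using finX by (simp add: sum.inter_restrict)
      also have "X \<inter> Y = Y" unfolding Y_def by blast
      finally show "(\<Sum>y\<in>Y. IA_column \<tau> A y t) = 0" using hc t by simp
    qed
    moreover have "Y \<subseteq> X" unfolding Y_def by blast
    ultimately have "Y = {}" using h by blast
    thus "\<forall>u\<in>X. c u = 0" unfolding Y_def by auto
  qed
qed

lemma cyc_sd: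
  assumes fin: "finite (fst \<tau> \<union> snd \<tau>)" and "cyc \<tau> A Y" "cyc \<tau> A Z"
  shows "cyc \<tau> A (sd Y Z)"
proof -
  have f: "finite Y" "finite Z" using assms unfolding cyc_def using finite_subset by blast+
  show ?thesis using assms(2,3) unfolding cyc_def
    by (auto simp: sum_sd[OF f]; auto simp: sd_def)
qed

lemma cyc_empty: "cyc \<tau> A {}"
  unfolding cyc_def by simp

lemma cyc_char:
  assumes d: "fst \<tau> \<inter> snd \<tau> = {}" and fin: "finite (fst \<tau> \<union> snd \<tau>)"
    and c: "cyc \<tau> A Y" and t: "t \<in> fst \<tau>"
  shows "(if t \<in> Y then 1 else 0) = (\<Sum>y\<in>Y \<inter> snd \<tau>. A t y)"
proof -
  have YU: "Y \<subseteq> fst \<tau> \<union> snd \<tau>" using c unfolding cyc_def by blast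
  have fY: "finite Y" using YU fin finite_subset by blast
  have "(\<Sum>y\<in>Y. IA_column \<tau> A y t) = (\<Sum>y\<in>Y \<inter> fst \<tau>. IA_column \<tau> A y t) + (\<Sum>y\<in>Y - fst \<tau>. IA_column \<tau> A y t)"
    using fY by (simp add: sum.Int_Diff)
  also have "(\<Sum>y\<in>Y \<inter> fst \<tau>. IA_column \<tau> A y t) = (\<Sum>y\<in>Y \<inter> fst \<tau>. if y = t then 1 else 0)"
    unfolding IA_column_def by (intro sum.cong) auto
  also have "\<dots> = (if t \<in> Y then 1 else 0)" using fY t by (simp add: sum.delta')
  also have "Y - fst \<tau> = Y \<inter> snd \<tau>" using YU d by blast
  also have "(\<Sum>y\<in>Y \<inter> snd \<tau>. IA_column \<tau> A y t) = (\<Sum>y\<in>Y \<inter> snd \<tau>. A t y)"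
    unfolding IA_column_def using d by (intro sum.cong) auto
  finally have "(if t \<in> Y then 1 else 0) + (\<Sum>y\<in>Y \<inter> snd \<tau>. A t y) = (0::bit)"
    using c t unfolding cyc_def by simp
  thus ?thesis by (simp only: bit_add_eq0)
qed

lemma cyc_T1:
  assumes d: "fst \<tau> \<inter> snd \<tau> = {}" and fin: "finite (fst \<tau> \<union> snd \<tau>)"
    and c: "cyc \<tau> A Y" and Y: "Y \<subseteq> fst \<tau>"
  shows "Y = {}"
proof (rule ccontr)
  assume "Y \<noteq> {}" then obtain t where t: "t \<in> Y" by blast
  have "Y \<inter> snd \<tau> = {}" using Y d by blast
  thus False using cyc_char[OF d fin c, of t] t Y by auto
qed


lemma skew_sym:
  assumes pp: "pair_partition \<Omega>" and t: "transversal_2tuple \<Omega> \<sigma>"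
    and sk: "skew_symmetric \<Omega> \<sigma> (B :: 'a \<Rightarrow> 'a \<Rightarrow> bit)"
    and y: "y \<in> snd \<sigma>" and w: "w \<in> snd \<sigma>"
  shows "B (mate \<Omega> w) y = B (mate \<Omega> y) w"
proof -
  have tt: "transversal \<Omega> (fst \<sigma>)" "transversal \<Omega> (snd \<sigma>)" "snd \<sigma> \<inter> fst \<sigma> = {}"
    using t unfolding transversal_2tuple_def by blast+
  have U: "fst \<sigma> \<union> snd \<sigma> = \<Union>\<Omega>" using transv_union[OF pp t] .
  have mw: "mate \<Omega> w \<in> fst \<sigma>" "mate \<Omega> y \<in> fst \<sigma>" using transv_mate[OF pp tt(2,1,3)] y w by blast+
  have p: "partner \<Omega> \<sigma> (mate \<Omega> y) = y" "partner \<Omega> \<sigma> (mate \<Omega> w) = w"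
  proof -
    have yU: "y \<in> \<Union>\<Omega>" "w \<in> \<Union>\<Omega>" using U y w by blast+
    show "partner \<Omega> \<sigma> (mate \<Omega> y) = y" "partner \<Omega> \<sigma> (mate \<Omega> w) = w"
      using partner_eq[OF pp t] mw mate_mate[OF pp yU(1)] mate_mate[OF pp yU(2)] by auto
  qed
  have "B (mate \<Omega> w) (partner \<Omega> \<sigma> (mate \<Omega> y)) = - B (mate \<Omega> y) (partner \<Omega> \<sigma> (mate \<Omega> w))"
    using sk mw unfolding skew_symmetric_def by blast
  thus ?thesis using p by simp
qed

lemma iso:
  assumes pp: "pair_partition \<Omega>" and t: "transversal_2tuple \<Omega> \<sigma>"
    and sk: "skew_symmetric \<Omega> \<sigma> (B :: 'a \<Rightarrow> 'a \<Rightarrow> bit)"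
    and cY: "cyc \<sigma> B Y" and cZ: "cyc \<sigma> B Z"
  shows "even (card {a\<in>Y. mate \<Omega> a \<in> Z})"
proof -
  let ?S1 = "fst \<sigma>" and ?S2 = "snd \<sigma>"
  have tt: "transversal \<Omega> ?S1" "transversal \<Omega> ?S2" "?S1 \<inter> ?S2 = {}" "?S2 \<inter> ?S1 = {}"
    using t unfolding transversal_2tuple_def by blast+
  have U: "?S1 \<union> ?S2 = \<Union>\<Omega>" using transv_union[OF pp t] .
  have fin: "finite (?S1 \<union> ?S2)" using pp U unfolding pair_partition_def by simp
  have YU: "Y \<subseteq> ?S1 \<union> ?S2" and ZU: "Z \<subseteq> ?S1 \<union> ?S2" using cY cZ unfolding cyc_def by blast+
  have fS1: "finite ?S1" and fS2: "finite ?S2" using fin by auto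
  have fY: "finite Y" using YU fin finite_subset by blast
  define ind where "ind = (\<lambda>(X::'a set) a. if a \<in> X then (1::bit) else 0)"
  define D where "D = (\<Sum>w\<in>Z \<inter> ?S2. \<Sum>y\<in>Y \<inter> ?S2. B (mate \<Omega> w) y)"
  have bij: "bij_betw (mate \<Omega>) ?S2 ?S1"
  proof (rule bij_betw_byWitness[where f'="mate \<Omega>"])
    show "\<forall>a\<in>?S2. mate \<Omega> (mate \<Omega> a) = a" using mate_mate[OF pp] U by blast
    show "\<forall>a\<in>?S1. mate \<Omega> (mate \<Omega> a) = a" using mate_mate[OF pp] U by blast
    show "mate \<Omega> ` ?S2 \<subseteq> ?S1" using transv_mate[OF pp tt(2,1,4)] by blast
    show "mate \<Omega> ` ?S1 \<subseteq> ?S2" using transv_mate[OF pp tt(1,2,3)] by blast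
  qed
  have "of_nat (card {a\<in>Y. mate \<Omega> a \<in> Z}) = (\<Sum>a\<in>{a\<in>Y. mate \<Omega> a \<in> Z}. (1::bit))" by simp
  also have "\<dots> = (\<Sum>a\<in>Y. ind Z (mate \<Omega> a))" unfolding ind_def
    using sum.inter_filter[OF fY, of "\<lambda>_. (1::bit)" "\<lambda>a. mate \<Omega> a \<in> Z"] by simp
  also have "\<dots> = (\<Sum>a\<in>Y \<inter> ?S1. ind Z (mate \<Omega> a)) + (\<Sum>a\<in>Y - ?S1. ind Z (mate \<Omega> a))"
    using fY by (simp add: sum.Int_Diff)
  also have "Y - ?S1 = Y \<inter> ?S2" using YU tt by blast
  also have "(\<Sum>a\<in>Y \<inter> ?S1. ind Z (mate \<Omega> a)) = D"
  proof -
    have "(\<Sum>a\<in>Y \<inter> ?S1. ind Z (mate \<Omega> a)) = (\<Sum>a\<in>?S1 \<inter> Y. ind Z (mate \<Omega> a))" by (simp add: Int_commute)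
    also have "\<dots> = (\<Sum>a\<in>?S1. if a \<in> Y then ind Z (mate \<Omega> a) else 0)" using fS1 by (simp add: sum.inter_restrict)
    also have "\<dots> = (\<Sum>w\<in>?S2. if mate \<Omega> w \<in> Y then ind Z (mate \<Omega> (mate \<Omega> w)) else 0)"
      using sum.reindex_bij_betw[OF bij, of "\<lambda>a. if a \<in> Y then ind Z (mate \<Omega> a) else 0"] by simp
    also have "\<dots> = (\<Sum>w\<in>?S2. if w \<in> Z then ind Y (mate \<Omega> w) else 0)"
    proof (intro sum.cong refl)
      fix w assume "w \<in> ?S2"
      hence "w \<in> \<Union>\<Omega>" using U by blast
      thus "(if mate \<Omega> w \<in> Y then ind Z (mate \<Omega> (mate \<Omega> w)) else 0) = (if w \<in> Z then ind Y (mate \<Omega> w) else 0)"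
        using mate_mate[OF pp] unfolding ind_def by auto
    qed
    also have "\<dots> = (\<Sum>w\<in>?S2 \<inter> Z. ind Y (mate \<Omega> w))" using fS2 by (simp add: sum.inter_restrict)
    also have "\<dots> = (\<Sum>w\<in>Z \<inter> ?S2. ind Y (mate \<Omega> w))" by (simp add: Int_commute)
    also have "\<dots> = (\<Sum>w\<in>Z \<inter> ?S2. \<Sum>y\<in>Y \<inter> ?S2. B (mate \<Omega> w) y)"
    proof (intro sum.cong refl)
      fix w assume "w \<in> Z \<inter> ?S2"
      hence "mate \<Omega> w \<in> ?S1" using transv_mate[OF pp tt(2,1,4)] by blast
      thus "ind Y (mate \<Omega> w) = (\<Sum>y\<in>Y \<inter> ?S2. B (mate \<Omega> w) y)"
        using cyc_char[OF tt(3) fin cY] unfolding ind_def by blast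
    qed
    finally show ?thesis unfolding D_def .
  qed
  also have "(\<Sum>a\<in>Y \<inter> ?S2. ind Z (mate \<Omega> a)) = D"
  proof -
    have "(\<Sum>a\<in>Y \<inter> ?S2. ind Z (mate \<Omega> a)) = (\<Sum>a\<in>Y \<inter> ?S2. \<Sum>w\<in>Z \<inter> ?S2. B (mate \<Omega> a) w)"
    proof (intro sum.cong refl)
      fix a assume "a \<in> Y \<inter> ?S2"
      hence "mate \<Omega> a \<in> ?S1" using transv_mate[OF pp tt(2,1,4)] by blast
      thus "ind Z (mate \<Omega> a) = (\<Sum>w\<in>Z \<inter> ?S2. B (mate \<Omega> a) w)"
        using cyc_char[OF tt(3) fin cZ] unfolding ind_def by blast
    qed
    also have "\<dots> = (\<Sum>w\<in>Z \<inter> ?S2. \<Sum>a\<in>Y \<inter> ?S2. B (mate \<Omega> a) w)" by (rule sum.swap)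
    also have "\<dots> = D" unfolding D_def
      by (intro sum.cong refl) (use skew_sym[OF pp t sk] in auto)
    finally show ?thesis .
  qed
  finally have "of_nat (card {a\<in>Y. mate \<Omega> a \<in> Z}) = (0::bit)" by simp
  thus ?thesis by (simp add: bit_of_nat_0)
qed

lemma rank_dep:
  fixes v :: "'x \<Rightarrow> 'r \<Rightarrow> bit"
  assumes "finite R" "finite X" "card R < card X"
  shows "\<exists>Y\<subseteq>X. Y \<noteq> {} \<and> (\<forall>r\<in>R. (\<Sum>y\<in>Y. v y r) = 0)"
  using assms
proof (induction R arbitrary: X v rule: finite_induct)
  case empty
  then obtain x where "x \<in> X" by fastforce
  thus ?case by (intro exI[of _ "{x}"]) auto
next
  case (insert r R)
  show ?case
  proof (cases "\<forall>x\<in>X. v x r = 0")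
    case True
    have "card R < card X" using insert by simp
    then obtain Y where Y: "Y \<subseteq> X" "Y \<noteq> {}" "\<forall>r\<in>R. (\<Sum>y\<in>Y. v y r) = 0"
      using insert.IH[OF insert.prems(1)] by blast
    have "(\<Sum>y\<in>Y. v y r) = 0" using True Y(1) by (intro sum.neutral) blast
    thus ?thesis using Y by blast
  next
    case False
    then obtain x0 where x0: "x0 \<in> X" "v x0 r = 1" by auto
    define w where "w = (\<lambda>x r'. v x r' + v x r * v x0 r')"
    have cX: "card R < card (X - {x0})" using insert x0 by simp
    obtain Y where Y: "Y \<subseteq> X - {x0}" "Y \<noteq> {}" "\<forall>r'\<in>R. (\<Sum>y\<in>Y. w y r') = 0"
      using insert.IH[OF _ cX, of w] insert.prems(1) by blast
    have fY: "finite Y" using Y(1) insert.prems(1) finite_subset by blast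
    define k where "k = (\<Sum>y\<in>Y. v y r)"
    have wsum: "(\<Sum>y\<in>Y. w y r') = (\<Sum>y\<in>Y. v y r') + k * v x0 r'" for r'
      unfolding w_def k_def by (simp add: sum.distrib sum_distrib_right)
    have all0: "\<forall>r'\<in>insert r R. (\<Sum>y\<in>Y. v y r') = k * v x0 r'"
    proof
      fix r' assume r': "r' \<in> insert r R"
      show "(\<Sum>y\<in>Y. v y r') = k * v x0 r'"
      proof (cases "r' = r")
        case True
        thus ?thesis using x0 unfolding k_def by simp
      next
        case False
        hence "(\<Sum>y\<in>Y. w y r') = 0" using Y r' by blast
        thus ?thesis using wsum[of r'] by (simp add: bit_add_eq0)
      qed
    qed
    show ?thesis
    proof (cases "k = 0")
      case True
      thus ?thesis using all0 Y by auto
    next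
      case False
      hence k1: "k = 1" by simp
      have "x0 \<notin> Y" using Y by blast
      hence "\<forall>r'\<in>insert r R. (\<Sum>y\<in>insert x0 Y. v y r') = 0"
        using all0 k1 fY by simp
      moreover have "insert x0 Y \<subseteq> X" using Y x0 by blast
      ultimately show ?thesis by blast
    qed
  qed
qed


lemma sub2: "S \<subseteq> {u, v} \<Longrightarrow> S = {} \<or> S = {u} \<or> S = {v} \<or> S = {u, v}"
  by (cases "u \<in> S"; cases "v \<in> S") auto

definition cycspace :: "'a set set \<Rightarrow> 'a set \<Rightarrow> 'a set \<Rightarrow> ('a set \<Rightarrow> bool) \<Rightarrow> bool" where
  "cycspace \<Omega> T1 T2 c \<longleftrightarrow> (\<forall>Y. c Y \<longrightarrow> Y \<subseteq> T1 \<union> T2) \<and> c {} \<and> (\<forall>Y Z. c Y \<longrightarrow> c Z \<longrightarrow> c (sd Y Z))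
     \<and> (\<forall>Y. c Y \<longrightarrow> Y \<subseteq> T1 \<longrightarrow> Y = {}) \<and> (\<forall>u\<in>T2. \<exists>Y. c Y \<and> Y \<inter> T2 = {u})
     \<and> (\<forall>Y Z. c Y \<longrightarrow> c Z \<longrightarrow> even (card {a\<in>Y. mate \<Omega> a \<in> Z}))"

definition gen :: "'a set \<Rightarrow> ('a set \<Rightarrow> bool) \<Rightarrow> 'a \<Rightarrow> 'a set" where
  "gen T2 c u = (THE Y. c Y \<and> Y \<inter> T2 = {u})"

lemma cs_sub: "cycspace \<Omega> T1 T2 c \<Longrightarrow> c Y \<Longrightarrow> Y \<subseteq> T1 \<union> T2"
  unfolding cycspace_def by blast
lemma cs_empty: "cycspace \<Omega> T1 T2 c \<Longrightarrow> c {}"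
  unfolding cycspace_def by blast
lemma cs_sd: "cycspace \<Omega> T1 T2 c \<Longrightarrow> c Y \<Longrightarrow> c Z \<Longrightarrow> c (sd Y Z)"
  unfolding cycspace_def by blast
lemma cs_T1: "cycspace \<Omega> T1 T2 c \<Longrightarrow> c Y \<Longrightarrow> Y \<subseteq> T1 \<Longrightarrow> Y = {}"
  unfolding cycspace_def by blast
lemma cs_gen: "cycspace \<Omega> T1 T2 c \<Longrightarrow> u \<in> T2 \<Longrightarrow> \<exists>Y. c Y \<and> Y \<inter> T2 = {u}"
  unfolding cycspace_def by blast
lemma cs_iso: "cycspace \<Omega> T1 T2 c \<Longrightarrow> c Y \<Longrightarrow> c Z \<Longrightarrow> even (card {a\<in>Y. mate \<Omega> a \<in> Z})"
  unfolding cycspace_def by blast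

locale twotup =
  fixes \<Omega> :: "'a set set" and T1 T2 :: "'a set"
  assumes pp: "pair_partition \<Omega>" and t2: "transversal_2tuple \<Omega> (T1, T2)"
begin

lemma U: "T1 \<union> T2 = \<Union>\<Omega>" using transv_union[OF pp t2] by simp
lemma disj: "T1 \<inter> T2 = {}" using t2 unfolding transversal_2tuple_def by simp
lemma fin: "finite (T1 \<union> T2)" using pp U unfolding pair_partition_def by simp
lemma m12: "a \<in> T1 \<Longrightarrow> mate \<Omega> a \<in> T2"
  using transv_mate[OF pp _ _ disj] t2 unfolding transversal_2tuple_def by auto
lemma m21: "a \<in> T2 \<Longrightarrow> mate \<Omega> a \<in> T1"
  using transv_mate[OF pp, of T2 T1] disj t2 unfolding transversal_2tuple_def by auto
lemma mm: "a \<in> T1 \<union> T2 \<Longrightarrow> mate \<Omega> (mate \<Omega> a) = a"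
  using mate_mate[OF pp] U by blast
lemma minj: "a \<in> T1 \<union> T2 \<Longrightarrow> b \<in> T1 \<union> T2 \<Longrightarrow> mate \<Omega> a = mate \<Omega> b \<Longrightarrow> a = b"
  by (metis mm)

lemma cs_unique:
  assumes cs: "cycspace \<Omega> T1 T2 c" and Y: "c Y" "c Y'" "Y \<inter> T2 = Y' \<inter> T2"
  shows "Y = Y'"
proof -
  have "Y \<subseteq> T1 \<union> T2" "Y' \<subseteq> T1 \<union> T2" using cs_sub[OF cs] Y by blast+
  hence "sd Y Y' \<subseteq> T1" using Y(3) unfolding sd_def by blast
  moreover have "c (sd Y Y')" using cs_sd[OF cs] Y by blast
  ultimately have "sd Y Y' = {}" using cs_T1[OF cs] by blast
  thus ?thesis unfolding sd_def by blast
qed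

lemma gen:
  assumes cs: "cycspace \<Omega> T1 T2 c" and u: "u \<in> T2"
  shows "c (gen T2 c u)" "gen T2 c u \<inter> T2 = {u}" "gen T2 c u \<subseteq> T1 \<union> {u}"
proof -
  have ex: "\<exists>!Y. c Y \<and> Y \<inter> T2 = {u}"
    using cs_gen[OF cs u] cs_unique[OF cs] by metis
  have g: "c (gen T2 c u) \<and> gen T2 c u \<inter> T2 = {u}" unfolding gen_def by (rule theI'[OF ex])
  thus "c (gen T2 c u)" "gen T2 c u \<inter> T2 = {u}" by auto
  have "gen T2 c u \<subseteq> T1 \<union> T2" using cs_sub[OF cs] g by blast
  thus "gen T2 c u \<subseteq> T1 \<union> {u}" using g by blast
qed

lemma K1sub:
  assumes u: "u \<in> T2"
  shows "subtransversal \<Omega> ((T1 - {mate \<Omega> u}) \<union> {u})"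
proof (rule subtransversal_crit[OF pp])
  show "(T1 - {mate \<Omega> u}) \<union> {u} \<subseteq> \<Union>\<Omega>" using U u by blast
  show "\<forall>a\<in>(T1 - {mate \<Omega> u}) \<union> {u}. mate \<Omega> a \<notin> (T1 - {mate \<Omega> u}) \<union> {u}"
  proof
    fix a assume a: "a \<in> (T1 - {mate \<Omega> u}) \<union> {u}"
    show "mate \<Omega> a \<notin> (T1 - {mate \<Omega> u}) \<union> {u}"
    proof (cases "a = u")
      case True thus ?thesis using m21[OF u] disj u by auto
    next
      case False
      hence a1: "a \<in> T1" "a \<noteq> mate \<Omega> u" using a by auto
      have "mate \<Omega> a \<in> T2" using m12 a1 by blast
      moreover have "mate \<Omega> a \<noteq> u" using a1 minj[of a "mate \<Omega> u"] mm[of u] u m21[OF u] by auto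
      ultimately show ?thesis using disj by blast
    qed
  qed
qed

lemma K1:
  assumes cs: "cycspace \<Omega> T1 T2 c" and u: "u \<in> T2"
  shows "(\<exists>Y\<subseteq>(T1 - {mate \<Omega> u}) \<union> {u}. Y \<noteq> {} \<and> c Y) \<longleftrightarrow> mate \<Omega> u \<notin> gen T2 c u"
proof -
  define G where "G = gen T2 c u"
  have G: "c G" "G \<inter> T2 = {u}" "G \<subseteq> T1 \<union> {u}" unfolding G_def using gen[OF cs u] by auto
  have mu: "mate \<Omega> u \<in> T1" "mate \<Omega> u \<noteq> u" using m21[OF u] disj u by auto
  have "(\<exists>Y\<subseteq>(T1 - {mate \<Omega> u}) \<union> {u}. Y \<noteq> {} \<and> c Y) \<longleftrightarrow> mate \<Omega> u \<notin> G"
  proof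
    assume "\<exists>Y\<subseteq>(T1 - {mate \<Omega> u}) \<union> {u}. Y \<noteq> {} \<and> c Y"
    then obtain Y where Y: "Y \<subseteq> (T1 - {mate \<Omega> u}) \<union> {u}" "Y \<noteq> {}" "c Y" by blast
    have "u \<in> Y"
    proof (rule ccontr)
      assume "u \<notin> Y" hence "Y \<subseteq> T1" using Y(1) by blast
      thus False using Y(2) cs_T1[OF cs Y(3)] by blast
    qed
    hence "Y \<inter> T2 = {u}" using Y(1) disj u by blast
    hence "Y = G" using cs_unique[OF cs Y(3) G(1)] G(2) by simp
    moreover have "mate \<Omega> u \<notin> Y" using Y(1) mu by blast
    ultimately show "mate \<Omega> u \<notin> G" by simp
  next
    assume h: "mate \<Omega> u \<notin> G"
    have "G \<subseteq> (T1 - {mate \<Omega> u}) \<union> {u}" using G(3) h by blast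
    moreover have "G \<noteq> {}" using G(2) by blast
    ultimately show "\<exists>Y\<subseteq>(T1 - {mate \<Omega> u}) \<union> {u}. Y \<noteq> {} \<and> c Y" using G(1) by blast
  qed
  thus ?thesis unfolding G_def .
qed

lemma K2sub:
  assumes u: "u \<in> T2" and t: "t \<in> T1" "t \<noteq> mate \<Omega> u"
  shows "subtransversal \<Omega> ((T1 - {mate \<Omega> u, t}) \<union> {u, mate \<Omega> t})"
proof (rule subtransversal_crit[OF pp])
  have v: "mate \<Omega> t \<in> T2" using m12 t by blast
  show "(T1 - {mate \<Omega> u, t}) \<union> {u, mate \<Omega> t} \<subseteq> \<Union>\<Omega>" using U u v by blast
  show "\<forall>a\<in>(T1 - {mate \<Omega> u, t}) \<union> {u, mate \<Omega> t}. mate \<Omega> a \<notin> (T1 - {mate \<Omega> u, t}) \<union> {u, mate \<Omega> t}"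
  proof
    fix a assume a: "a \<in> (T1 - {mate \<Omega> u, t}) \<union> {u, mate \<Omega> t}"
    show "mate \<Omega> a \<notin> (T1 - {mate \<Omega> u, t}) \<union> {u, mate \<Omega> t}"
    proof (cases "a = u \<or> a = mate \<Omega> t")
      case True
      hence "mate \<Omega> a = mate \<Omega> u \<or> mate \<Omega> a = t" using mm[of t] t by auto
      moreover have "mate \<Omega> u \<in> T1" using m21 u by blast
      moreover have "mate \<Omega> t \<in> T2" using m12 t by blast
      moreover have "mate \<Omega> u \<notin> T2" "t \<notin> T2" using disj t \<open>mate \<Omega> u \<in> T1\<close> by blast+
      ultimately show ?thesis using u by auto
    next
      case False
      hence a1: "a \<in> T1" "a \<noteq> mate \<Omega> u" "a \<noteq> t" using a by auto
      have "mate \<Omega> a \<in> T2" using m12 a1 by blast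
      moreover have "mate \<Omega> a \<noteq> u" using a1 minj[of a "mate \<Omega> u"] mm[of u] u m21[OF u] by auto
      moreover have "mate \<Omega> a \<noteq> mate \<Omega> t" using a1 minj[of a t] t by auto
      ultimately show ?thesis using disj by blast
    qed
  qed
qed

lemma K2:
  assumes cs: "cycspace \<Omega> T1 T2 c" and u: "u \<in> T2" and t: "t \<in> T1" "t \<noteq> mate \<Omega> u"
  shows "(\<exists>Y\<subseteq>(T1 - {mate \<Omega> u, t}) \<union> {u, mate \<Omega> t}. Y \<noteq> {} \<and> c Y) \<longleftrightarrow>
    ((mate \<Omega> u \<notin> gen T2 c u \<and> t \<notin> gen T2 c u) \<or>
     (mate \<Omega> u \<notin> gen T2 c (mate \<Omega> t) \<and> t \<notin> gen T2 c (mate \<Omega> t)) \<or>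
     ((mate \<Omega> u \<in> gen T2 c u \<longleftrightarrow> mate \<Omega> u \<in> gen T2 c (mate \<Omega> t)) \<and>
      (t \<in> gen T2 c u \<longleftrightarrow> t \<in> gen T2 c (mate \<Omega> t))))"
    (is "?L \<longleftrightarrow> ?R")
proof -
  define v where "v = mate \<Omega> t"
  define Gu where "Gu = gen T2 c u"
  define Gv where "Gv = gen T2 c v"
  have v: "v \<in> T2" unfolding v_def using m12 t by blast
  have uv: "u \<noteq> v"
  proof
    assume "u = v"
    hence "mate \<Omega> u = mate \<Omega> (mate \<Omega> t)" unfolding v_def by simp
    also have "\<dots> = t" using mm t by blast
    finally show False using t(2) by simp
  qed
  have mu: "mate \<Omega> u \<in> T1" using m21 u by blast
  have Gu: "c Gu" "Gu \<inter> T2 = {u}" "Gu \<subseteq> T1 \<union> {u}" unfolding Gu_def using gen[OF cs u] by auto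
  have Gv: "c Gv" "Gv \<inter> T2 = {v}" "Gv \<subseteq> T1 \<union> {v}" unfolding Gv_def using gen[OF cs v] by auto
  have Gs: "c (sd Gu Gv)" "sd Gu Gv \<inter> T2 = {u, v}"
  proof -
    show "c (sd Gu Gv)" using cs_sd[OF cs Gu(1) Gv(1)] .
    have a: "x \<in> T2 \<Longrightarrow> x \<in> Gu \<longleftrightarrow> x = u" for x using Gu(2) by auto
    have b: "x \<in> T2 \<Longrightarrow> x \<in> Gv \<longleftrightarrow> x = v" for x using Gv(2) by auto
    show "sd Gu Gv \<inter> T2 = {u, v}" unfolding sd_def using a b uv u v by auto
  qed
  have ex: "\<And>Y. Y \<subseteq> T1 \<union> T2 \<Longrightarrow> Y \<inter> T2 \<subseteq> {u, v} \<Longrightarrow> Y \<inter> T2 = {} \<or> Y \<inter> T2 = {u} \<or> Y \<inter> T2 = {v} \<or> Y \<inter> T2 = {u, v}"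
    by (rule sub2)
  let ?X = "(T1 - {mate \<Omega> u, t}) \<union> {u, v}"
  have "?L \<longleftrightarrow> (\<exists>Y\<subseteq>?X. Y \<noteq> {} \<and> c Y)" unfolding v_def ..
  also have "\<dots> \<longleftrightarrow> ((mate \<Omega> u \<notin> Gu \<and> t \<notin> Gu) \<or> (mate \<Omega> u \<notin> Gv \<and> t \<notin> Gv) \<or>
     ((mate \<Omega> u \<in> Gu \<longleftrightarrow> mate \<Omega> u \<in> Gv) \<and> (t \<in> Gu \<longleftrightarrow> t \<in> Gv)))"
  proof
    assume "\<exists>Y\<subseteq>?X. Y \<noteq> {} \<and> c Y"
    then obtain Y where Y: "Y \<subseteq> ?X" "Y \<noteq> {}" "c Y" by blast
    have YU: "Y \<subseteq> T1 \<union> T2" using Y cs_sub[OF cs] by blast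
    have mu2: "mate \<Omega> u \<noteq> u" "mate \<Omega> u \<noteq> v" "t \<noteq> u" "t \<noteq> v"
    proof -
      have nd: "\<And>x. x \<in> T1 \<Longrightarrow> x \<notin> T2" using disj by blast
      show "mate \<Omega> u \<noteq> u" using nd[OF mu] u by metis
      show "mate \<Omega> u \<noteq> v" using nd[OF mu] v by metis
      show "t \<noteq> u" using nd[OF t(1)] u by metis
      show "t \<noteq> v" using nd[OF t(1)] v by metis
    qed
    have nm: "mate \<Omega> u \<notin> Y" "t \<notin> Y" using Y(1) mu2 by blast+
    have "Y \<inter> T2 \<subseteq> {u, v}" using Y(1) disj by blast
    from ex[OF YU this] show "(mate \<Omega> u \<notin> Gu \<and> t \<notin> Gu) \<or> (mate \<Omega> u \<notin> Gv \<and> t \<notin> Gv) \<or>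
     ((mate \<Omega> u \<in> Gu \<longleftrightarrow> mate \<Omega> u \<in> Gv) \<and> (t \<in> Gu \<longleftrightarrow> t \<in> Gv))"
    proof (elim disjE)
      assume "Y \<inter> T2 = {}"
      hence "Y \<subseteq> T1" using YU by blast
      hence False using Y cs_T1[OF cs] by blast
      thus ?thesis ..
    next
      assume "Y \<inter> T2 = {u}"
      hence "Y = Gu" using cs_unique[OF cs Y(3) Gu(1)] Gu(2) by simp
      thus ?thesis using nm by simp
    next
      assume "Y \<inter> T2 = {v}"
      hence "Y = Gv" using cs_unique[OF cs Y(3) Gv(1)] Gv(2) by simp
      thus ?thesis using nm by simp
    next
      assume "Y \<inter> T2 = {u, v}"
      hence "Y = sd Gu Gv" using cs_unique[OF cs Y(3) Gs(1)] Gs(2) by simp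
      hence "mate \<Omega> u \<notin> sd Gu Gv" "t \<notin> sd Gu Gv" using nm by simp_all
      hence "mate \<Omega> u \<in> Gu \<longleftrightarrow> mate \<Omega> u \<in> Gv" "t \<in> Gu \<longleftrightarrow> t \<in> Gv" unfolding sd_def by blast+
      thus ?thesis by simp
    qed
  next
    assume h: "(mate \<Omega> u \<notin> Gu \<and> t \<notin> Gu) \<or> (mate \<Omega> u \<notin> Gv \<and> t \<notin> Gv) \<or>
     ((mate \<Omega> u \<in> Gu \<longleftrightarrow> mate \<Omega> u \<in> Gv) \<and> (t \<in> Gu \<longleftrightarrow> t \<in> Gv))"
    have uGu: "u \<in> Gu" "u \<notin> Gv" "v \<in> Gv" using Gu Gv uv by blast+
    from h show "\<exists>Y\<subseteq>?X. Y \<noteq> {} \<and> c Y"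
    proof (elim disjE)
      assume "mate \<Omega> u \<notin> Gu \<and> t \<notin> Gu"
      thus ?thesis using Gu uGu by (intro exI[of _ Gu]) blast
    next
      assume "mate \<Omega> u \<notin> Gv \<and> t \<notin> Gv"
      thus ?thesis using Gv uGu by (intro exI[of _ Gv]) blast
    next
      assume "(mate \<Omega> u \<in> Gu \<longleftrightarrow> mate \<Omega> u \<in> Gv) \<and> (t \<in> Gu \<longleftrightarrow> t \<in> Gv)"
      hence a: "mate \<Omega> u \<notin> sd Gu Gv" "t \<notin> sd Gu Gv" unfolding sd_def by blast+
      have "sd Gu Gv \<subseteq> T1 \<union> {u, v}" using Gu(3) Gv(3) unfolding sd_def by blast
      hence "sd Gu Gv \<subseteq> ?X" using a by blast
      moreover have "u \<in> sd Gu Gv" using uGu unfolding sd_def by blast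
      ultimately show ?thesis using Gs(1) by blast
    qed
  qed
  finally show ?thesis by (simp only: Gu_def Gv_def v_def)
qed

lemma K3:
  assumes cs: "cycspace \<Omega> T1 T2 c" and u: "u \<in> T2" and t: "t \<in> T1" "t \<noteq> mate \<Omega> u"
  shows "t \<in> gen T2 c u \<longleftrightarrow> mate \<Omega> u \<in> gen T2 c (mate \<Omega> t)"
proof -
  define v where "v = mate \<Omega> t"
  define Gu where "Gu = gen T2 c u"
  define Gv where "Gv = gen T2 c v"
  have v: "v \<in> T2" unfolding v_def using m12 t by blast
  have ut: "u \<noteq> t" using u t disj by blast
  have Gu: "c Gu" "Gu \<inter> T2 = {u}" "Gu \<subseteq> T1 \<union> {u}" unfolding Gu_def using gen[OF cs u] by auto
  have Gv: "c Gv" "Gv \<inter> T2 = {v}" "Gv \<subseteq> T1 \<union> {v}" unfolding Gv_def using gen[OF cs v] by auto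
  have ev: "even (card {a\<in>Gu. mate \<Omega> a \<in> Gv})" using cs_iso[OF cs Gu(1) Gv(1)] .
  have mem: "a \<in> {a\<in>Gu. mate \<Omega> a \<in> Gv} \<longleftrightarrow> (a = u \<and> mate \<Omega> u \<in> Gv) \<or> (a = t \<and> t \<in> Gu)" for a
  proof
    assume a: "a \<in> {a\<in>Gu. mate \<Omega> a \<in> Gv}"
    show "(a = u \<and> mate \<Omega> u \<in> Gv) \<or> (a = t \<and> t \<in> Gu)"
    proof (cases "a = u")
      case True thus ?thesis using a by blast
    next
      case False
      hence a1: "a \<in> T1" using a Gu by blast
      hence "mate \<Omega> a \<in> T2" using m12 by blast
      hence "mate \<Omega> a = v" using a Gv by blast
      hence "a = t" using minj[of a t] a1 t unfolding v_def by auto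
      thus ?thesis using a by blast
    qed
  next
    assume "(a = u \<and> mate \<Omega> u \<in> Gv) \<or> (a = t \<and> t \<in> Gu)"
    moreover have "mate \<Omega> t \<in> Gv" using Gv unfolding v_def by blast
    ultimately show "a \<in> {a\<in>Gu. mate \<Omega> a \<in> Gv}" using Gu by blast
  qed
  hence S: "{a\<in>Gu. mate \<Omega> a \<in> Gv} = (if mate \<Omega> u \<in> Gv then {u} else {}) \<union> (if t \<in> Gu then {t} else {})"
    by auto
  show ?thesis using ev ut unfolding S Gu_def[symmetric] Gv_def[symmetric] v_def[symmetric]
    by (cases "mate \<Omega> u \<in> Gv"; cases "t \<in> Gu") auto
qed


lemma prop_aux:
  assumes "p1 \<longleftrightarrow> p2" "d1 \<longleftrightarrow> d2" "b1 \<longleftrightarrow> e1" "b2 \<longleftrightarrow> e2"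
    and "((\<not>p1 \<and> \<not>b1) \<or> (\<not>e1 \<and> \<not>d1) \<or> ((p1 \<longleftrightarrow> e1) \<and> (b1 \<longleftrightarrow> d1))) \<longleftrightarrow>
         ((\<not>p2 \<and> \<not>b2) \<or> (\<not>e2 \<and> \<not>d2) \<or> ((p2 \<longleftrightarrow> e2) \<and> (b2 \<longleftrightarrow> d2)))"
  shows "b1 \<longleftrightarrow> b2"
  using assms by (cases p1; cases d1; cases b1; cases b2) auto

lemma gen_eq:
  assumes cs1: "cycspace \<Omega> T1 T2 c1" and cs2: "cycspace \<Omega> T1 T2 c2"
    and eqv: "\<And>X. subtransversal \<Omega> X \<Longrightarrow> (\<exists>Y\<subseteq>X. Y \<noteq> {} \<and> c1 Y) \<longleftrightarrow> (\<exists>Y\<subseteq>X. Y \<noteq> {} \<and> c2 Y)"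
    and u: "u \<in> T2"
  shows "gen T2 c1 u = gen T2 c2 u"
proof (rule set_eqI)
  fix a
  have G1: "gen T2 c1 u \<inter> T2 = {u}" "gen T2 c1 u \<subseteq> T1 \<union> {u}" using gen[OF cs1 u] by auto
  have G2: "gen T2 c2 u \<inter> T2 = {u}" "gen T2 c2 u \<subseteq> T1 \<union> {u}" using gen[OF cs2 u] by auto
  have mu: "mate \<Omega> u \<in> T1" using m21 u by blast
  have P: "mate \<Omega> u \<in> gen T2 c1 u \<longleftrightarrow> mate \<Omega> u \<in> gen T2 c2 u"
    using K1[OF cs1 u] K1[OF cs2 u] eqv[OF K1sub[OF u]] by blast
  show "a \<in> gen T2 c1 u \<longleftrightarrow> a \<in> gen T2 c2 u"
  proof (cases "a \<in> T1")
    case False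
    have "a \<in> gen T2 c1 u \<longleftrightarrow> a = u" using G1 False u by blast
    moreover have "a \<in> gen T2 c2 u \<longleftrightarrow> a = u" using G2 False u by blast
    ultimately show ?thesis by simp
  next
    case aT1: True
    show ?thesis
    proof (cases "a = mate \<Omega> u")
      case True thus ?thesis using P by simp
    next
      case False
      define v where "v = mate \<Omega> a"
      have v: "v \<in> T2" unfolding v_def using m12 aT1 by blast
      have mv: "mate \<Omega> v = a" unfolding v_def using mm aT1 by blast
      have D: "a \<in> gen T2 c1 v \<longleftrightarrow> a \<in> gen T2 c2 v"
        using K1[OF cs1 v] K1[OF cs2 v] eqv[OF K1sub[OF v]] unfolding mv by blast
      have F: "((mate \<Omega> u \<notin> gen T2 c1 u \<and> a \<notin> gen T2 c1 u) \<or>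
     (mate \<Omega> u \<notin> gen T2 c1 v \<and> a \<notin> gen T2 c1 v) \<or>
     ((mate \<Omega> u \<in> gen T2 c1 u \<longleftrightarrow> mate \<Omega> u \<in> gen T2 c1 v) \<and>
      (a \<in> gen T2 c1 u \<longleftrightarrow> a \<in> gen T2 c1 v))) \<longleftrightarrow>
     ((mate \<Omega> u \<notin> gen T2 c2 u \<and> a \<notin> gen T2 c2 u) \<or>
     (mate \<Omega> u \<notin> gen T2 c2 v \<and> a \<notin> gen T2 c2 v) \<or>
     ((mate \<Omega> u \<in> gen T2 c2 u \<longleftrightarrow> mate \<Omega> u \<in> gen T2 c2 v) \<and>
      (a \<in> gen T2 c2 u \<longleftrightarrow> a \<in> gen T2 c2 v)))"
        using K2[OF cs1 u aT1 False] K2[OF cs2 u aT1 False] eqv[OF K2sub[OF u aT1 False]]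
        unfolding v_def by simp
      have S1: "a \<in> gen T2 c1 u \<longleftrightarrow> mate \<Omega> u \<in> gen T2 c1 v"
        using K3[OF cs1 u aT1 False] unfolding v_def .
      have S2: "a \<in> gen T2 c2 u \<longleftrightarrow> mate \<Omega> u \<in> gen T2 c2 v"
        using K3[OF cs2 u aT1 False] unfolding v_def .
      show ?thesis by (rule prop_aux[OF P D S1 S2 F])
    qed
  qed
qed

lemma abstract_dir:
  assumes cs1: "cycspace \<Omega> T1 T2 c1" and cs2: "cycspace \<Omega> T1 T2 c2"
    and eqv: "\<And>X. subtransversal \<Omega> X \<Longrightarrow> (\<exists>Y\<subseteq>X. Y \<noteq> {} \<and> c1 Y) \<longleftrightarrow> (\<exists>Y\<subseteq>X. Y \<noteq> {} \<and> c2 Y)"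
    and Y: "c1 Y"
  shows "c2 Y"
proof -
  have main: "finite P \<Longrightarrow> \<forall>Y. c1 Y \<and> Y \<inter> T2 = P \<longrightarrow> c2 Y" for P
  proof (induction P rule: finite_induct)
    case empty
    show ?case
    proof (intro allI impI)
      fix Y assume h: "c1 Y \<and> Y \<inter> T2 = {}"
      hence "Y \<subseteq> T1" using cs_sub[OF cs1] by blast
      hence "Y = {}" using cs_T1[OF cs1] h by blast
      thus "c2 Y" using cs_empty[OF cs2] by simp
    qed
  next
    case (insert u P)
    show ?case
    proof (intro allI impI)
      fix Y assume h: "c1 Y \<and> Y \<inter> T2 = insert u P"
      have u: "u \<in> T2" using h by blast
      define G where "G = gen T2 c1 u"
      have G: "c1 G" "G \<inter> T2 = {u}" unfolding G_def using gen[OF cs1 u] by auto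
      have a: "x \<in> T2 \<Longrightarrow> x \<in> G \<longleftrightarrow> x = u" for x using G(2) by auto
      have b: "x \<in> T2 \<Longrightarrow> x \<in> Y \<longleftrightarrow> x \<in> insert u P" for x using h by auto
      have PT: "P \<subseteq> T2" using h by blast
      have "sd Y G \<inter> T2 = P" unfolding sd_def using a b insert.hyps(2) PT by auto
      moreover have "c1 (sd Y G)" using cs_sd[OF cs1] h G(1) by blast
      ultimately have c2Y': "c2 (sd Y G)" using insert.IH by blast
      have "G = gen T2 c2 u" unfolding G_def by (rule gen_eq[OF cs1 cs2 eqv u])
      hence "c2 G" using gen[OF cs2 u] by simp
      hence "c2 (sd (sd Y G) G)" using cs_sd[OF cs2 c2Y'] by blast
      moreover have "sd (sd Y G) G = Y" unfolding sd_def by blast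
      ultimately show "c2 Y" by simp
    qed
  qed
  have "finite (Y \<inter> T2)" using fin by auto
  thus ?thesis using main Y by blast
qed

lemma cycspace_rep:
  assumes rho: "transversal_2tuple \<Omega> \<rho>" and sk: "skew_symmetric \<Omega> \<rho> (C :: 'a \<Rightarrow> 'a \<Rightarrow> bit)"
    and T1p: "\<And>Y. cyc \<rho> C Y \<Longrightarrow> Y \<subseteq> T1 \<Longrightarrow> Y = {}"
  shows "cycspace \<Omega> T1 T2 (cyc \<rho> C)"
proof -
  have Ur: "fst \<rho> \<union> snd \<rho> = T1 \<union> T2" using transv_union[OF pp rho] U by simp
  have finr: "finite (fst \<rho> \<union> snd \<rho>)" using Ur fin by simp
  have dr: "fst \<rho> \<inter> snd \<rho> = {}" using rho unfolding transversal_2tuple_def by blast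
  have cr: "card (fst \<rho>) = card T1"
    using card_transv[OF pp rho] card_transv[OF pp t2] by simp
  have fT1: "finite T1" using fin by simp
  have gen_ex: "\<exists>Y. cyc \<rho> C Y \<and> Y \<inter> T2 = {u}" if u: "u \<in> T2" for u
  proof -
    have uT1: "u \<notin> T1" using u disj by blast
    have "card (fst \<rho>) < card (insert u T1)" using cr uT1 fT1 by simp
    then obtain Y where Y: "Y \<subseteq> insert u T1" "Y \<noteq> {}"
      "\<forall>r\<in>fst \<rho>. (\<Sum>y\<in>Y. IA_column \<rho> C y r) = 0"
      using rank_dep[of "fst \<rho>" "insert u T1" "\<lambda>y r. IA_column \<rho> C y r"] finr fT1 by auto
    have cY: "cyc \<rho> C Y" unfolding cyc_def using Y Ur u by blast
    have "u \<in> Y"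
    proof (rule ccontr)
      assume "u \<notin> Y" hence "Y \<subseteq> T1" using Y(1) by blast
      thus False using T1p[OF cY] Y(2) by blast
    qed
    hence "Y \<inter> T2 = {u}" using Y(1) disj u by blast
    thus ?thesis using cY by blast
  qed
  show ?thesis unfolding cycspace_def
  proof (intro conjI allI impI ballI)
    show "\<And>Y. cyc \<rho> C Y \<Longrightarrow> Y \<subseteq> T1 \<union> T2" using Ur unfolding cyc_def by blast
    show "cyc \<rho> C {}" by (rule cyc_empty)
    show "\<And>Y Z. cyc \<rho> C Y \<Longrightarrow> cyc \<rho> C Z \<Longrightarrow> cyc \<rho> C (sd Y Z)" by (rule cyc_sd[OF finr])
    show "\<And>Y. cyc \<rho> C Y \<Longrightarrow> Y \<subseteq> T1 \<Longrightarrow> Y = {}" by (rule T1p)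
    show "\<And>u. u \<in> T2 \<Longrightarrow> \<exists>Y. cyc \<rho> C Y \<and> Y \<inter> T2 = {u}" by (rule gen_ex)
    show "\<And>Y Z. cyc \<rho> C Y \<Longrightarrow> cyc \<rho> C Z \<Longrightarrow> even (card {a \<in> Y. mate \<Omega> a \<in> Z})"
      by (rule iso[OF pp rho sk])
  qed
qed

end

lemma uniq:
  assumes sb1: "strongly_binary_sheltering Q1" and sb2: "strongly_binary_sheltering Q2"
    and zz: "Z_of Q1 = Z_of Q2"
  shows "Q1 = Q2"
proof -
  have f: "fst Q1 = fst Q2" using zz unfolding Z_of_def by (metis fst_conv)
  define \<Omega> where "\<Omega> = fst Q1"
  have pp: "pair_partition \<Omega>" using sb1 unfolding \<Omega>_def strongly_binary_sheltering_def by blast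
  obtain \<tau> and A :: "'a \<Rightarrow> 'a \<Rightarrow> bit" where t: "transversal_2tuple \<Omega> \<tau>" and skA: "skew_symmetric \<Omega> \<tau> A"
    and Q1: "Q1 = Q_of A \<tau> \<Omega>"
    using sb1 unfolding \<Omega>_def strongly_binary_sheltering_def by blast
  obtain \<sigma> and B :: "'a \<Rightarrow> 'a \<Rightarrow> bit" where s: "transversal_2tuple \<Omega> \<sigma>" and skB: "skew_symmetric \<Omega> \<sigma> B"
    and Q2: "Q2 = Q_of B \<sigma> \<Omega>"
    using sb2 f unfolding \<Omega>_def strongly_binary_sheltering_def by metis
  define T1 where "T1 = fst \<tau>"
  define T2 where "T2 = snd \<tau>"
  have t2: "transversal_2tuple \<Omega> (T1, T2)" using t unfolding T1_def T2_def by simp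
  interpret twotup \<Omega> T1 T2 using pp t2 by unfold_locales
  have Ut: "fst \<tau> \<union> snd \<tau> = \<Union>\<Omega>" using transv_union[OF pp t] .
  have Us: "fst \<sigma> \<union> snd \<sigma> = \<Union>\<Omega>" using transv_union[OF pp s] .
  have fint: "finite (fst \<tau> \<union> snd \<tau>)" and fins: "finite (fst \<sigma> \<union> snd \<sigma>)"
    using pp Ut Us unfolding pair_partition_def by auto
  have ci: "column_indep \<tau> A X \<longleftrightarrow> column_indep \<sigma> B X" if X: "subtransversal \<Omega> X" for X
  proof -
    have "snd (Z_of Q1) = snd (Z_of Q2)" using zz by simp
    hence "{I \<in> {S. column_indep \<tau> A S}. subtransversal \<Omega> I} = {I \<in> {S. column_indep \<sigma> B S}. subtransversal \<Omega> I}"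
      unfolding Z_of_def Q1 Q2 Q_of_def by simp
    thus ?thesis using X by blast
  qed
  have eqv: "(\<exists>Y\<subseteq>X. Y \<noteq> {} \<and> cyc \<tau> A Y) \<longleftrightarrow> (\<exists>Y\<subseteq>X. Y \<noteq> {} \<and> cyc \<sigma> B Y)"
    if X: "subtransversal \<Omega> X" for X
  proof -
    have XU: "X \<subseteq> \<Union>\<Omega>" using X unfolding subtransversal_def by blast
    show ?thesis using ci[OF X] indep_cyc[OF fint, of A X] indep_cyc[OF fins, of B X] XU Ut Us by blast
  qed
  have dt: "fst \<tau> \<inter> snd \<tau> = {}" using t unfolding transversal_2tuple_def by blast
  have T1A: "Y = {}" if "cyc \<tau> A Y" "Y \<subseteq> T1" for Y
    using cyc_T1[OF dt fint that(1)] that(2) unfolding T1_def by blast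
  have T1sub: "subtransversal \<Omega> T1"
    using transversal_sub t unfolding T1_def transversal_2tuple_def by blast
  have T1B: "Y = {}" if "cyc \<sigma> B Y" "Y \<subseteq> T1" for Y
  proof (rule ccontr)
    assume "Y \<noteq> {}"
    hence "\<exists>Y'\<subseteq>T1. Y' \<noteq> {} \<and> cyc \<sigma> B Y'" using that by blast
    hence "\<exists>Y'\<subseteq>T1. Y' \<noteq> {} \<and> cyc \<tau> A Y'" using eqv[OF T1sub] by blast
    thus False using T1A by blast
  qed
  have csA: "cycspace \<Omega> T1 T2 (cyc \<tau> A)" by (rule cycspace_rep[OF t skA T1A])
  have csB: "cycspace \<Omega> T1 T2 (cyc \<sigma> B)" by (rule cycspace_rep[OF s skB T1B])
  have eqv': "(\<exists>Y\<subseteq>X. Y \<noteq> {} \<and> cyc \<sigma> B Y) \<longleftrightarrow> (\<exists>Y\<subseteq>X. Y \<noteq> {} \<and> cyc \<tau> A Y)"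
    if X: "subtransversal \<Omega> X" for X using eqv[OF X] by blast
  have cc: "cyc \<tau> A Y \<longleftrightarrow> cyc \<sigma> B Y" for Y
    using abstract_dir[OF csA csB eqv] abstract_dir[OF csB csA eqv'] by blast
  have "column_indep \<tau> A X \<longleftrightarrow> column_indep \<sigma> B X" for X
    using indep_cyc[OF fint, of A X] indep_cyc[OF fins, of B X] cc Ut Us by simp
  hence "{S. column_indep \<tau> A S} = {S. column_indep \<sigma> B S}" by blast
  thus ?thesis unfolding Q1 Q2 Q_of_def by simp
qed

theorem proposition2p13:
  fixes Z :: "'a multimatroid"
  assumes "strongly_binary_2matroid Z"
  shows "\<exists>!Q. strongly_binary_sheltering Q \<and> Z_of Q = Z"
proof -
  obtain Q0 where Q0: "strongly_binary_sheltering Q0" "Z = Z_of Q0"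
    using assms unfolding strongly_binary_2matroid_def by blast
  show ?thesis
  proof (rule ex1I[of _ Q0])
    show "strongly_binary_sheltering Q0 \<and> Z_of Q0 = Z" using Q0 by simp
  next
    fix Q assume "strongly_binary_sheltering Q \<and> Z_of Q = Z"
    thus "Q = Q0" using uniq[OF _ Q0(1)] Q0(2) by blast
  qed
qed

end
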